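(* Let $\mathbb{F}$ be a field of characteristic $2$ with at least $4$ elements, and let $B\in M_4(\mathbb{F})$ be a non-derogative matrix. (a) If $\operatorname{Trace}(B)=u_3\neq 0$, then for every $a\in\mathbb{F}$ with $a\neq 0$ and $a\neq u_3$, there exist $N,D\in M_4(\mathbb{F})$ with $B=N+D$, $N^2=0$, and $D$ diagonalizable with every eigenvalue in $\{0,\ a,\ u_3+a\}$. (b) If $\operatorname{Trace}(B)=0$, then for every $a\in\mathbb{F}$ with $a\neq 0,1$, there exist $N,D\in M_4(\mathbb{F})$ with $B=N+D$, $N^2=0$, and $D$ diagonalizable with eigenvalues $0,1,a,a+1$.
   Context: A square matrix is non-derogative if its minimal polynomial equals its characteristic polynomial. A matrix $D\in M_n(\mathbb{F})$ is diagonalizable if there exists an invertible $U\in M_n(\mathbb{F})$ such that $U^{-1}DU$ is diagonal. *)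

theory Defs
  imports "Jordan_Normal_Form.Matrix" "Jordan_Normal_Form.Char_Poly"
begin

definition mat_trace :: "'a :: comm_ring_1 mat \<Rightarrow> 'a" where
  "mat_trace A = (\<Sum>i<dim_row A. A $$ (i, i))"

definition poly_mat :: "'a :: comm_ring_1 poly \<Rightarrow> 'a mat \<Rightarrow> 'a mat" where
  "poly_mat p A = foldr (\<lambda>c M. M * A + c \<cdot>\<^sub>m 1\<^sub>m (dim_row A)) (coeffs p)
                        (0\<^sub>m (dim_row A) (dim_row A))"

definition minimal_poly :: "'a :: field mat \<Rightarrow> 'a poly" where
  "minimal_poly A = (THE p. monic p \<and> poly_mat p A = 0\<^sub>m (dim_row A) (dim_row A) \<and>
      (\<forall>q. poly_mat q A = 0\<^sub>m (dim_row A) (dim_row A) \<longrightarrow> p dvd q))"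

definition non_derogative :: "'a :: field mat \<Rightarrow> bool" where
  "non_derogative A \<longleftrightarrow> minimal_poly A = char_poly A"

definition diagonalizable :: "'a :: field mat \<Rightarrow> bool" where
  "diagonalizable D \<longleftrightarrow> (\<exists>U V. U \<in> carrier_mat (dim_row D) (dim_row D) \<and>
      V \<in> carrier_mat (dim_row D) (dim_row D) \<and>
      U * V = 1\<^sub>m (dim_row D) \<and> V * U = 1\<^sub>m (dim_row D) \<and> diagonal_mat (V * D * U))"

end

theory Submission
  imports Defs
begin

lemma pm_foldr_carrier: "A \<in> carrier_mat n n \<Longrightarrow>
   foldr (\<lambda>c M. M * A + c \<cdot>\<^sub>m 1\<^sub>m n) cs (0\<^sub>m n n) \<in> carrier_mat n n"
  by (induct cs) auto

lemma pm_carrier[simp]: "A \<in> carrier_mat n n \<Longrightarrow> poly_mat p A \<in> carrier_mat n n"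
  unfolding poly_mat_def using pm_foldr_carrier by (metis carrier_matD(1))

lemma pm_zero[simp]: "A \<in> carrier_mat n n \<Longrightarrow> poly_mat 0 A = 0\<^sub>m n n"
  unfolding poly_mat_def by auto

lemma pm_pCons: assumes A: "A \<in> carrier_mat n n"
  shows "poly_mat (pCons c p) A = poly_mat p A * A + c \<cdot>\<^sub>m 1\<^sub>m n"
proof -
  have d: "dim_row A = n" using A by auto
  show ?thesis
  proof (cases "p = 0 \<and> c = 0")
    case True
    then show ?thesis using A by (intro eq_matI, auto simp: poly_mat_def d)
  next
    case False
    then have "coeffs (pCons c p) = c # coeffs p" by (auto simp: cCons_def)
    then show ?thesis by (simp add: poly_mat_def d)
  qed
qed

lemma pm_foldr_dims: "dim_row (foldr (\<lambda>c M. M * A + c \<cdot>\<^sub>m 1\<^sub>m n) cs (0\<^sub>m n n)) = n \<and>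
   dim_col (foldr (\<lambda>c M. M * A + c \<cdot>\<^sub>m 1\<^sub>m n) cs (0\<^sub>m n n)) = n"
  by (induct cs) auto

lemma pm_dims[simp]: "dim_row (poly_mat p A) = dim_row A" "dim_col (poly_mat p A) = dim_row A"
  unfolding poly_mat_def using pm_foldr_dims by blast+

lemma pm_pCons0: assumes A: "A \<in> carrier_mat n n"
  shows "poly_mat (pCons 0 p) A = poly_mat p A * A"
  using A by (simp add: pm_pCons[OF A]) (intro eq_matI, auto)

lemma pm_add: assumes A: "A \<in> carrier_mat n n"
  shows "poly_mat (p + q) A = poly_mat p A + poly_mat q A"
proof (induct p arbitrary: q rule: pCons_induct)
  case 0
  then show ?case using A by simp
next
  case (pCons a p)
  obtain b q' where q: "q = pCons b q'" by (cases q)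
  have P: "poly_mat p A \<in> carrier_mat n n" and Q: "poly_mat q' A \<in> carrier_mat n n" using A by auto
  have "poly_mat (pCons a p + q) A = poly_mat (pCons (a+b) (p+q')) A" using q by simp
  also have "\<dots> = (poly_mat p A + poly_mat q' A) * A + (a+b) \<cdot>\<^sub>m 1\<^sub>m n"
    using pm_pCons[OF A] pCons(2) by simp
  also have "\<dots> = (poly_mat p A * A + a \<cdot>\<^sub>m 1\<^sub>m n) + (poly_mat q' A * A + b \<cdot>\<^sub>m 1\<^sub>m n)"
    using P Q A by (simp add: add_mult_distrib_mat[OF P Q A]) (intro eq_matI, auto simp: algebra_simps)
  finally show ?case using q pm_pCons[OF A] by simp
qed

lemma pm_smult: assumes A: "A \<in> carrier_mat n n"
  shows "poly_mat (Polynomial.smult c p) A = c \<cdot>\<^sub>m poly_mat p A"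
proof (induct p rule: pCons_induct)
  case 0
  then show ?case using A by (intro eq_matI) auto
next
  case (pCons a p)
  have P: "poly_mat p A \<in> carrier_mat n n" using A by auto
  show ?case using pCons(2) P A by (simp add: pm_pCons[OF A] mult_smult_assoc_mat[OF P A]) 
    (intro eq_matI, auto simp: algebra_simps)
qed

lemma pm_commA: assumes A: "A \<in> carrier_mat n n"
  shows "poly_mat p A * A = A * poly_mat p A"
proof (induct p rule: pCons_induct)
  case 0
  then show ?case using A by simp
next
  case (pCons a p)
  have P: "poly_mat p A \<in> carrier_mat n n" using A by auto
  have PA: "poly_mat p A * A \<in> carrier_mat n n" by (rule mult_carrier_mat[OF P A])
  have aI: "a \<cdot>\<^sub>m 1\<^sub>m n \<in> carrier_mat n n" by simp
  have "poly_mat (pCons a p) A * A = (poly_mat p A * A) * A + (a \<cdot>\<^sub>m 1\<^sub>m n) * A"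
    unfolding pm_pCons[OF A] by (rule add_mult_distrib_mat[OF PA aI A])
  also have "(a \<cdot>\<^sub>m 1\<^sub>m n) * A = A * (a \<cdot>\<^sub>m 1\<^sub>m n)" using A
    by (simp add: mult_smult_assoc_mat[of _ n n A n] mult_smult_distrib[of A n n _ n])
  also have "(poly_mat p A * A) * A = A * (poly_mat p A * A)" 
    using pCons(2) assoc_mult_mat[OF A P A] by simp
  also have "A * (poly_mat p A * A) + A * (a \<cdot>\<^sub>m 1\<^sub>m n) = A * poly_mat (pCons a p) A"
    unfolding pm_pCons[OF A] by (rule mult_add_distrib_mat[OF A PA aI, symmetric])
  finally show ?case .
qed

lemma pm_mult: assumes A: "A \<in> carrier_mat n n"
  shows "poly_mat (p * q) A = poly_mat p A * poly_mat q A"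
proof (induct p rule: pCons_induct)
  case 0
  then show ?case using A by (simp add: left_mult_zero_mat[of _ n n])
next
  case (pCons a p)
  have P: "poly_mat p A \<in> carrier_mat n n" and Q: "poly_mat q A \<in> carrier_mat n n" using A by auto
  have "poly_mat (pCons a p * q) A = poly_mat (Polynomial.smult a q + pCons 0 (p * q)) A" by simp
  also have "\<dots> = a \<cdot>\<^sub>m poly_mat q A + (poly_mat p A * poly_mat q A) * A"
    using pCons(2) by (simp add: pm_add[OF A] pm_smult[OF A] pm_pCons0[OF A] A)
  also have "(poly_mat p A * poly_mat q A) * A = poly_mat p A * (A * poly_mat q A)"
    using assoc_mult_mat[OF P Q A] pm_commA[OF A, of q] by simp
  also have "\<dots> = (poly_mat p A * A) * poly_mat q A" by (rule assoc_mult_mat[OF P A Q, symmetric])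
  also have "a \<cdot>\<^sub>m poly_mat q A + (poly_mat p A * A) * poly_mat q A = 
      (poly_mat p A * A + a \<cdot>\<^sub>m 1\<^sub>m n) * poly_mat q A"
  proof -
    have PA: "poly_mat p A * A \<in> carrier_mat n n" by (rule mult_carrier_mat[OF P A])
    have aI: "a \<cdot>\<^sub>m 1\<^sub>m n \<in> carrier_mat n n" by simp
    have "(poly_mat p A * A + a \<cdot>\<^sub>m 1\<^sub>m n) * poly_mat q A = 
       (poly_mat p A * A) * poly_mat q A + (a \<cdot>\<^sub>m 1\<^sub>m n) * poly_mat q A"
      by (rule add_mult_distrib_mat[OF PA aI Q])
    also have "(a \<cdot>\<^sub>m 1\<^sub>m n) * poly_mat q A = a \<cdot>\<^sub>m poly_mat q A"
      using Q by (simp add: mult_smult_assoc_mat[of _ n n _ n] left_mult_one_mat[OF Q])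
    finally show ?thesis using comm_add_mat[OF smult_carrier_mat[OF Q] mult_carrier_mat[OF PA Q]] by simp
  qed
  finally show ?case by (simp add: pm_pCons[OF A])
qed

lemma monic_dvd_deg_eq: fixes p q :: "'a::field poly"
  assumes p: "monic p" and q: "monic q" and d: "p dvd q" and deg: "degree q \<le> degree p"
  shows "p = q"
proof -
  from d obtain k where k: "q = p * k" by (rule dvdE)
  have q0: "q \<noteq> 0" using q by auto
  hence k0: "k \<noteq> 0" "p \<noteq> 0" using k by auto
  have "degree q = degree p + degree k" using k k0 by (simp add: degree_mult_eq)
  hence dk: "degree k = 0" using deg by simp
  have "lead_coeff q = lead_coeff p * lead_coeff k" using k by (simp add: lead_coeff_mult)
  hence "lead_coeff k = 1" using p q by simp
  hence "k = 1" using dk by (metis degree_0_id one_pCons)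
  thus ?thesis using k by simp
qed

lemma ideal_gen:
  fixes I :: "'a::field poly set"
  assumes add: "\<And>p q. p \<in> I \<Longrightarrow> q \<in> I \<Longrightarrow> p + q \<in> I"
    and mul: "\<And>p q. q \<in> I \<Longrightarrow> p * q \<in> I"
    and q0: "q0 \<in> I" "q0 \<noteq> 0"
  shows "\<exists>m. monic m \<and> m \<in> I \<and> (\<forall>q\<in>I. m dvd q)"
proof -
  define d where "d = (LEAST d. \<exists>p\<in>I. p \<noteq> 0 \<and> degree p = d)"
  have ex: "\<exists>p\<in>I. p \<noteq> 0 \<and> degree p = d" unfolding d_def
    by (rule LeastI[of _ "degree q0"]) (use q0 in auto)
  then obtain p where p: "p \<in> I" "p \<noteq> 0" "degree p = d" by auto
  have least: "d \<le> degree r" if "r \<in> I" "r \<noteq> 0" for r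
    unfolding d_def by (rule Least_le) (use that in auto)
  define m where "m = Polynomial.smult (inverse (lead_coeff p)) p"
  have mI: "m \<in> I" using mul[OF p(1), of "[:inverse (lead_coeff p):]"] by (simp add: m_def)
  have lc: "lead_coeff p \<noteq> 0" using p(2) by simp
  have monic: "monic m" using lc by (simp add: m_def)
  have dm: "degree m = d" using p(3) lc by (simp add: m_def)
  have "m dvd q" if q: "q \<in> I" for q
  proof -
    have e: "q div m * m + q mod m = q" by (rule div_mult_mod_eq)
    have eq: "q mod m = q + (- (q div m)) * m" using e by (simp add: add.commute add_implies_diff)
    have rI: "q mod m \<in> I" unfolding eq by (rule add[OF q mul[OF mI]])
    show ?thesis
    proof (rule ccontr)
      assume "\<not> m dvd q" hence r0: "q mod m \<noteq> 0" by (simp add: dvd_eq_mod_eq_0)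
      have m0: "m \<noteq> 0" using monic by auto
      have "degree (q mod m) < degree m" using degree_mod_less[OF m0, of q] r0 by simp
      with least[OF rI r0] dm show False by simp
    qed
  qed
  then show ?thesis using monic mI by blast
qed

lemma nd_no_small_ann:
  fixes B :: "'a::field mat"
  assumes B: "B \<in> carrier_mat n n" and nd: "non_derogative B"
    and q: "poly_mat q B = 0\<^sub>m n n" "q \<noteq> 0"
  shows "n \<le> degree q"
proof -
  let ?I = "{q. poly_mat q B = 0\<^sub>m n n}"
  have "\<exists>m. monic m \<and> m \<in> ?I \<and> (\<forall>q\<in>?I. m dvd q)"
  proof (rule ideal_gen)
    show "p + q \<in> ?I" if "p \<in> ?I" "q \<in> ?I" for p q using that by (simp add: pm_add[OF B])
    show "p * q \<in> ?I" if "q \<in> ?I" for p q using that B by (simp add: pm_mult[OF B] right_mult_zero_mat[of _ n n])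
  qed (use q in auto)
  then obtain m where m: "monic m" "poly_mat m B = 0\<^sub>m n n" "\<And>q. poly_mat q B = 0\<^sub>m n n \<Longrightarrow> m dvd q" by auto
  have dB: "dim_row B = n" using B by auto
  have "minimal_poly B = m" unfolding minimal_poly_def dB
  proof (rule the_equality)
    show "monic m \<and> poly_mat m B = 0\<^sub>m n n \<and> (\<forall>q. poly_mat q B = 0\<^sub>m n n \<longrightarrow> m dvd q)" using m by auto
    fix p assume p: "monic p \<and> poly_mat p B = 0\<^sub>m n n \<and> (\<forall>q. poly_mat q B = 0\<^sub>m n n \<longrightarrow> p dvd q)"
    have md: "m dvd p" using m(3) p by blast
    have pd: "p dvd m" using p m(2) by blast
    have m0: "m \<noteq> 0" using m(1) by auto
    have "degree p \<le> degree m" by (rule dvd_imp_degree_le[OF pd m0])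
    then have "m = p" using monic_dvd_deg_eq[OF m(1) _ md] p by blast
    then show "p = m" by simp
  qed
  with nd have cm: "char_poly B = m" unfolding non_derogative_def by simp
  have "degree m \<le> degree q" using m(3)[OF q(1)] q(2) by (rule dvd_imp_degree_le)
  then show ?thesis using degree_monic_char_poly[OF B] cm by simp
qed

definition act :: "'a::field mat \<Rightarrow> 'a poly \<Rightarrow> 'a vec \<Rightarrow> 'a vec" where
  "act B p u = poly_mat p B *\<^sub>v u"

lemma vec_eq4: "x \<in> carrier_vec n \<Longrightarrow> y \<in> carrier_vec n \<Longrightarrow> (\<And>i. i < n \<Longrightarrow> x $ i = y $ i) \<Longrightarrow> x = y"
  by (intro eq_vecI) auto

lemma vh1: fixes x :: "'a::ab_group_add vec" assumes x: "x \<in> carrier_vec n" and y: "y \<in> carrier_vec n" and e: "x + y = 0\<^sub>v n"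
  shows "x = - y" "y = - x"
proof -
  have xy: "x $ i + y $ i = 0" if "i < n" for i
    using arg_cong[OF e, of "\<lambda>v. v $ i"] that y by simp
  show "x = - y"
  proof (rule vec_eq4[of _ n])
    fix i assume i: "i < n" 
    show "x $ i = (- y) $ i" using xy[OF i] i y by (simp add: eq_neg_iff_add_eq_0)
  qed (use x y in auto)
  show "y = - x"
  proof (rule vec_eq4[of _ n])
    fix i assume i: "i < n" 
    show "y $ i = (- x) $ i" using xy[OF i] i x by (simp add: eq_neg_iff_add_eq_0 add.commute)
  qed (use x y in auto)
qed

lemma vh2: fixes x :: "'a::ab_group_add vec" assumes x: "x \<in> carrier_vec n" and y: "y \<in> carrier_vec n" and z: "z \<in> carrier_vec n"
  and e: "y = x + z"
  shows "x = y + - z"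
proof (rule vec_eq4[of _ n])
  fix i assume i: "i < n"
  have "y $ i = x $ i + z $ i" using arg_cong[OF e, of "\<lambda>v. v $ i"] i z by simp
  then show "x $ i = (y + - z) $ i" using i z by simp
qed (use x y z in auto)

lemma vh3: fixes x :: "'a::ab_group_add vec" assumes x: "x \<in> carrier_vec n" and y: "y \<in> carrier_vec n" and e: "x + y = 0\<^sub>v n" and y0: "y = 0\<^sub>v n"
  shows "x = 0\<^sub>v n"
proof (rule vec_eq4[of _ n])
  fix i assume i: "i < n"
  have "x $ i + y $ i = 0" using arg_cong[OF e, of "\<lambda>v. v $ i"] i y by simp
  then show "x $ i = 0\<^sub>v n $ i" using i y0 by simp
qed (use x in auto)

context
  fixes B :: "'a::field mat" and n
  assumes B: "B \<in> carrier_mat n n"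
begin

lemma dimB: "dim_row B = n" using B by (rule carrier_matD)

lemma act_dim[simp]: "dim_vec (act B p u) = n"
  unfolding act_def by (simp only: dim_mult_mat_vec pm_dims dimB)

lemma act_carrier[simp]: "act B p u \<in> carrier_vec n"
  unfolding carrier_vec_def by (simp only: act_dim mem_Collect_eq)

lemma act_add: "u \<in> carrier_vec n \<Longrightarrow> act B (p + q) u = act B p u + act B q u"
  unfolding act_def pm_add[OF B] using B by (simp add: add_mult_distrib_mat_vec[of _ n n])

lemma act_mult: "u \<in> carrier_vec n \<Longrightarrow> act B (p * q) u = act B p (act B q u)"
  unfolding act_def pm_mult[OF B] using B by (simp add: assoc_mult_mat_vec[of _ n n _ n])

lemma act_vadd: "u \<in> carrier_vec n \<Longrightarrow> v \<in> carrier_vec n \<Longrightarrow> act B p (u + v) = act B p u + act B p v"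
  unfolding act_def using B by (simp add: mult_add_distrib_mat_vec[of _ n n])

lemma act_zero_poly[simp]: "u \<in> carrier_vec n \<Longrightarrow> act B 0 u = 0\<^sub>v n"
  unfolding act_def using B by (intro eq_vecI) auto

lemma act_zero_vec[simp]: "act B p (0\<^sub>v n) = 0\<^sub>v n"
  unfolding act_def using B by (intro eq_vecI) auto

lemma act_neg: "u \<in> carrier_vec n \<Longrightarrow> act B (-p) u = - act B p u"
proof -
  assume u: "u \<in> carrier_vec n"
  have e: "act B (-p) u + act B p u = 0\<^sub>v n" using act_add[OF u, of "-p" p] u by simp
  show ?thesis
  proof (rule vec_eq4[of _ n])
    fix i assume i: "i < n"
    have "(act B (-p) u + act B p u) $ i = 0" using e i by simp
    then show "act B (-p) u $ i = (- act B p u) $ i" using i by (simp add: eq_neg_iff_add_eq_0)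
  qed auto
qed

lemma act_pCons: "u \<in> carrier_vec n \<Longrightarrow> act B (pCons c p) u = act B p (B *\<^sub>v u) + c \<cdot>\<^sub>v u"
proof -
  assume u: "u \<in> carrier_vec n"
  have P: "poly_mat p B \<in> carrier_mat n n" using B by simp
  have "(poly_mat p B * B + c \<cdot>\<^sub>m 1\<^sub>m n) *\<^sub>v u = (poly_mat p B * B) *\<^sub>v u + (c \<cdot>\<^sub>m 1\<^sub>m n) *\<^sub>v u"
    by (rule add_mult_distrib_mat_vec[OF mult_carrier_mat[OF P B] _ u]) simp
  also have "(poly_mat p B * B) *\<^sub>v u = poly_mat p B *\<^sub>v (B *\<^sub>v u)" by (rule assoc_mult_mat_vec[OF P B u])
  also have "(c \<cdot>\<^sub>m 1\<^sub>m n) *\<^sub>v u = c \<cdot>\<^sub>v u" using u by (intro eq_vecI) auto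
  finally show ?thesis unfolding act_def pm_pCons[OF B] .
qed

lemma ann_exists:
  assumes u: "u \<in> carrier_vec n" and q: "q \<noteq> 0" "act B q u = 0\<^sub>v n"
  shows "\<exists>m. monic m \<and> act B m u = 0\<^sub>v n \<and> (\<forall>q. act B q u = 0\<^sub>v n \<longrightarrow> m dvd q)"
proof -
  have "\<exists>m. monic m \<and> m \<in> {q. act B q u = 0\<^sub>v n} \<and> (\<forall>q\<in>{q. act B q u = 0\<^sub>v n}. m dvd q)"
  proof (rule ideal_gen)
    show "p + q \<in> {q. act B q u = 0\<^sub>v n}" if "p \<in> {q. act B q u = 0\<^sub>v n}" "q \<in> {q. act B q u = 0\<^sub>v n}" for p q
      using that act_add[OF u] by simp
    show "p * q \<in> {q. act B q u = 0\<^sub>v n}" if "q \<in> {q. act B q u = 0\<^sub>v n}" for p q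
      using that act_mult[OF u] by simp
  qed (use q in auto)
  then show ?thesis by auto
qed


lemma max_ann_kills:
  assumes allann: "\<And>v. v \<in> carrier_vec n \<Longrightarrow> \<exists>q. q \<noteq> 0 \<and> act B q v = 0\<^sub>v n"
    and u: "u \<in> carrier_vec n" and m: "monic m" "act B m u = 0\<^sub>v n" "\<And>q. act B q u = 0\<^sub>v n \<Longrightarrow> m dvd q"
    and max: "\<And>v c. v \<in> carrier_vec n \<Longrightarrow> monic c \<Longrightarrow> act B c v = 0\<^sub>v n \<Longrightarrow>
        (\<forall>q. act B q v = 0\<^sub>v n \<longrightarrow> c dvd q) \<Longrightarrow> degree c \<le> degree m"
    and w: "w \<in> carrier_vec n"
  shows "act B m w = 0\<^sub>v n"
proof -
  have annE: "\<exists>a. monic a \<and> act B a v = 0\<^sub>v n \<and> (\<forall>q. act B q v = 0\<^sub>v n \<longrightarrow> a dvd q)" 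
    if "v \<in> carrier_vec n" for v
    using allann[OF that] ann_exists[OF that] by blast
  define C where "C = {f. \<exists>g. act B f w = act B g u}"
  obtain q0 where q0: "q0 \<noteq> 0" "act B q0 w = 0\<^sub>v n" using allann[OF w] by blast
  have "\<exists>s. monic s \<and> s \<in> C \<and> (\<forall>f\<in>C. s dvd f)"
  proof (rule ideal_gen[of C q0])
    show "p + q \<in> C" if "p \<in> C" "q \<in> C" for p q
    proof -
      from that obtain g1 g2 where "act B p w = act B g1 u" "act B q w = act B g2 u" unfolding C_def by auto
      then have "act B (p+q) w = act B (g1+g2) u" using act_add[OF w] act_add[OF u] by simp
      then show ?thesis unfolding C_def by blast
    qed
    show "p * q \<in> C" if "q \<in> C" for p q
    proof -
      from that obtain g where "act B q w = act B g u" unfolding C_def by auto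
      then have "act B (p*q) w = act B (p*g) u" using act_mult[OF w] act_mult[OF u] by simp
      then show ?thesis unfolding C_def by blast
    qed
    have "act B q0 w = act B 0 u" using q0 act_zero_poly[OF u] by simp
    then show "q0 \<in> C" unfolding C_def by blast
  qed (rule q0(1))
  then obtain s where s: "monic s" "s \<in> C" "\<And>f. f \<in> C \<Longrightarrow> s dvd f" by blast
  obtain g where g: "act B s w = act B g u" using s(2) unfolding C_def by auto
  define h where "h = g div s"
  define r where "r = g mod s"
  have grs: "g + s * (-h) = r" unfolding h_def r_def
    using div_mult_mod_eq[of g s] by (simp add: algebra_simps add_implies_diff)
  define w' where "w' = w + act B (-h) u"
  have w'c: "w' \<in> carrier_vec n" unfolding w'_def using w by simp
  have actw': "act B f w' = act B f w + act B (f * -h) u" for f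
    unfolding w'_def act_vadd[OF w act_carrier] act_mult[OF u] ..
  have sw': "act B s w' = act B r u"
  proof -
    have "act B s w' = act B g u + act B (s * -h) u" using actw'[of s] g by simp
    also have "\<dots> = act B (g + s * -h) u" by (rule act_add[OF u, symmetric])
    finally show ?thesis unfolding grs .
  qed
  have s0: "s \<noteq> 0" using s(1) by auto
  have r0: "r = 0"
  proof (rule ccontr)
    assume r: "r \<noteq> 0"
    obtain a where a: "monic a" "act B a w' = 0\<^sub>v n" "\<And>q. act B q w' = 0\<^sub>v n \<Longrightarrow> a dvd q"
      using annE[OF w'c] by blast
    have "act B a w + act B (a * -h) u = 0\<^sub>v n" using actw'[of a] a(2) by simp
    then have "act B a w = - act B (a * -h) u" using vh1 by (metis act_carrier)
    also have "\<dots> = act B (-(a * -h)) u" using act_neg[OF u] by simp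
    finally have "a \<in> C" unfolding C_def by blast
    then obtain t where at: "a = s * t" using s(3) by (blast elim: dvdE)
    have "act B (t * r) u = 0\<^sub>v n"
    proof -
      have "act B (t * r) u = act B t (act B r u)" using act_mult[OF u] by simp
      also have "\<dots> = act B t (act B s w')" using sw' by simp
      also have "\<dots> = act B (t * s) w'" using act_mult[OF w'c] by simp
      also have "\<dots> = act B a w'" using at by (simp add: mult.commute)
      finally show ?thesis using a(2) by simp
    qed
    hence mtr: "m dvd t * r" using m(3) by blast
    have a0: "a \<noteq> 0" using a(1) by auto
    hence t0: "t \<noteq> 0" using at by auto
    have tr0: "t * r \<noteq> 0" using t0 r by simp
    have "degree m \<le> degree (t * r)" by (rule dvd_imp_degree_le[OF mtr tr0])
    also have "\<dots> = degree t + degree r" using t0 r by (simp add: degree_mult_eq)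
    finally have 1: "degree m \<le> degree t + degree r" .
    have 2: "degree r < degree s" using degree_mod_less[OF s0, of g] r unfolding r_def by simp
    have 3: "degree a = degree s + degree t" using at s0 t0 by (simp add: degree_mult_eq)
    have 4: "degree a \<le> degree m" using max[OF w'c a(1) a(2)] a(3) by blast
    show False using 1 2 3 4 by linarith
  qed
  have sw'0: "act B s w' = 0\<^sub>v n" using sw' r0 act_zero_poly[OF u] by simp
  define x where "x = u + w'"
  have xc: "x \<in> carrier_vec n" unfolding x_def using u w'c by simp
  obtain c where c: "monic c" "act B c x = 0\<^sub>v n" "\<And>q. act B q x = 0\<^sub>v n \<Longrightarrow> c dvd q"
    using annE[OF xc] by blast
  have cx: "act B c u + act B c w' = 0\<^sub>v n" using c(2) act_vadd[OF u w'c] unfolding x_def by simp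
  have cw'u: "act B c w' = - act B c u" using vh1(2)[OF act_carrier act_carrier cx] .
  have "act B c w = act B c w' + - act B (c * -h) u"
    by (rule vh2[OF act_carrier act_carrier act_carrier actw'])
  also have "\<dots> = act B (-c) u + act B (-(c * -h)) u" using cw'u act_neg[OF u] by simp
  also have "\<dots> = act B (-c + -(c * -h)) u" by (rule act_add[OF u, symmetric])
  finally have "c \<in> C" unfolding C_def by blast
  then obtain k where ck: "c = s * k" using s(3) by (blast elim: dvdE)
  have cw'0: "act B c w' = 0\<^sub>v n" using ck act_mult[OF w'c, of k s] sw'0 by (simp add: mult.commute)
  hence "act B c u = 0\<^sub>v n" using vh3[OF act_carrier act_carrier cx] by simp
  hence "m dvd c" using m(3) by blast
  have "degree c \<le> degree m" using max[OF xc c(1) c(2)] c(3) by blast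
  hence "m = c" using monic_dvd_deg_eq[OF m(1) c(1) \<open>m dvd c\<close>] by blast
  hence mw'0: "act B m w' = 0\<^sub>v n" using cw'0 by simp
  have "act B (m * -h) u = 0\<^sub>v n" 
    using act_mult[OF u, of "-h" m] m(2) by (simp add: mult.commute)
  then show "act B m w = 0\<^sub>v n" using actw'[of m] mw'0 vh3[OF act_carrier act_carrier] by metis
qed

end


lemma sum4: "(\<Sum>j\<in>{0..<4::nat}. f j) = f 0 + f 1 + f 2 + (f 3 :: 'a::comm_monoid_add)"
  by (simp add: eval_nat_numeral add.assoc)

lemma less4: "(i::nat) < 4 \<Longrightarrow> i = 0 \<or> i = 1 \<or> i = 2 \<or> i = 3" by auto

definition kv :: "'a::field mat \<Rightarrow> nat \<Rightarrow> 'a vec \<Rightarrow> 'a vec" where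
  "kv B j u = ((\<lambda>v. B *\<^sub>v v) ^^ j) u"

definition krylov :: "'a::field mat \<Rightarrow> 'a vec \<Rightarrow> 'a mat" where
  "krylov B u = mat 4 4 (\<lambda>(i,j). kv B j u $ i)"

lemma kv_0[simp]: "kv B 0 u = u" by (simp add: kv_def)
lemma kv_Suc: "kv B (Suc j) u = B *\<^sub>v kv B j u" by (simp add: kv_def)

lemma kv_carrier[simp]: "B \<in> carrier_mat n n \<Longrightarrow> u \<in> carrier_vec n \<Longrightarrow> kv B j u \<in> carrier_vec n"
  by (induct j) (auto simp: kv_Suc)

lemma krylov_carrier[simp]: "krylov B u \<in> carrier_mat 4 4" by (simp add: krylov_def)

lemma act_poly4:
  assumes B: "B \<in> carrier_mat 4 4" and u: "u \<in> carrier_vec 4" and i: "i < 4"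
  shows "act B [:c0,c1,c2,c3:] u $ i = c0 * u $ i + c1 * kv B 1 u $ i + c2 * kv B 2 u $ i + c3 * kv B 3 u $ i"
proof -
  have u1: "B *\<^sub>v u \<in> carrier_vec 4" using B u by simp
  have u2: "B *\<^sub>v (B *\<^sub>v u) \<in> carrier_vec 4" using B u by simp
  have u3: "B *\<^sub>v (B *\<^sub>v (B *\<^sub>v u)) \<in> carrier_vec 4" using B u by simp
  have k: "kv B 1 u = B *\<^sub>v u" "kv B 2 u = B *\<^sub>v (B *\<^sub>v u)" "kv B 3 u = B *\<^sub>v (B *\<^sub>v (B *\<^sub>v u))"
    by (simp_all add: kv_def eval_nat_numeral)
  show ?thesis using i u u1 u2 u3 B
    by (simp add: act_pCons[OF B] kv_Suc eval_nat_numeral algebra_simps)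
qed

lemma small_ann:
  fixes B :: "'a::field mat"
  assumes B: "B \<in> carrier_mat 4 4" and u: "u \<in> carrier_vec 4" and dz: "det (krylov B u) = 0"
  shows "\<exists>q. q \<noteq> 0 \<and> degree q \<le> 3 \<and> act B q u = 0\<^sub>v 4"
proof -
  obtain v where v: "v \<in> carrier_vec 4" "v \<noteq> 0\<^sub>v 4" "krylov B u *\<^sub>v v = 0\<^sub>v 4"
    using det_0_iff_vec_prod_zero[OF krylov_carrier] dz by blast
  define q where "q = [:v$0, v$1, v$2, v$3:]"
  have q0: "q \<noteq> 0"
  proof
    assume "q = 0"
    then have vv: "v $ 0 = 0" "v $ 1 = 0" "v $ 2 = 0" "v $ 3 = 0" unfolding q_def by simp_all
    have "v = 0\<^sub>v 4"
    proof (rule vec_eq4[of _ 4])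
      fix i :: nat assume "i < 4"
      then show "v $ i = 0\<^sub>v 4 $ i" using vv less4[of i] by auto
    qed (use v in auto)
    then show False using v(2) by simp
  qed
  have dq: "degree q \<le> 3" unfolding q_def
    by (rule degree_le) (simp add: coeff_pCons eval_nat_numeral split: nat.split)
  have "act B q u = krylov B u *\<^sub>v v"
  proof (rule vec_eq4[of _ 4])
    fix i :: nat assume i: "i < 4"
    have "(krylov B u *\<^sub>v v) $ i = (\<Sum>j\<in>{0..<4}. kv B j u $ i * v $ j)"
      using i v(1) by (simp add: krylov_def scalar_prod_def)
    then show "act B q u $ i = (krylov B u *\<^sub>v v) $ i"
      unfolding q_def act_poly4[OF B u i] sum4 by (simp add: algebra_simps)
  qed (use B u v in auto)
  then show ?thesis using q0 dq v(3) by auto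
qed


lemma cyclic_exists:
  fixes B :: "'a::field mat"
  assumes B: "B \<in> carrier_mat 4 4"
    and H: "\<And>q. poly_mat q B = 0\<^sub>m 4 4 \<Longrightarrow> q \<noteq> 0 \<Longrightarrow> 4 \<le> degree q"
  shows "\<exists>u \<in> carrier_vec 4. det (krylov B u) \<noteq> 0"
proof (rule ccontr)
  assume "\<not> ?thesis"
  then have dz: "\<And>u. u \<in> carrier_vec 4 \<Longrightarrow> det (krylov B u) = 0" by blast
  have small: "\<exists>q. q \<noteq> 0 \<and> degree q \<le> 3 \<and> act B q u = 0\<^sub>v 4" if u: "u \<in> carrier_vec 4" for u
    using small_ann[OF B u dz[OF u]] .
  define P where "P = (\<lambda>u m. monic m \<and> act B m u = 0\<^sub>v 4 \<and> (\<forall>q. act B q u = 0\<^sub>v 4 \<longrightarrow> m dvd q))"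
  have Pex: "\<exists>m. P u m \<and> degree m \<le> 3" if u: "u \<in> carrier_vec 4" for u
  proof -
    obtain q where q: "q \<noteq> 0" "degree q \<le> 3" "act B q u = 0\<^sub>v 4" using small[OF u] by blast
    obtain m where m: "P u m" using ann_exists[OF B u q(1) q(3)] unfolding P_def by blast
    have "m dvd q" using m q(3) unfolding P_def by blast
    then have "degree m \<le> degree q" using q(1) by (rule dvd_imp_degree_le)
    then show ?thesis using m q by auto
  qed
  have Puniq: "m = m'" if "P u m" "P u m'" for u m m'
  proof -
    have d1: "m dvd m'" "m' dvd m" using that unfolding P_def by auto
    have "m \<noteq> 0" using that unfolding P_def by auto
    then have "degree m' \<le> degree m" using d1(2) dvd_imp_degree_le by blast
    then show ?thesis using monic_dvd_deg_eq[OF _ _ d1(1)] that unfolding P_def by blast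
  qed
  define D where "D = {degree m | u m. u \<in> carrier_vec 4 \<and> P u m}"
  have DS: "D \<subseteq> {..3}"
  proof
    fix d assume "d \<in> D"
    then obtain u m where um: "d = degree m" "u \<in> carrier_vec 4" "P u m" unfolding D_def by blast
    obtain m' where m': "P u m'" "degree m' \<le> 3" using Pex[OF um(2)] by blast
    have "m = m'" using Puniq um(3) m'(1) by blast
    then show "d \<in> {..3}" using um m' by simp
  qed
  have Dfin: "finite D" by (rule finite_subset[OF DS]) simp
  have Dne: "D \<noteq> {}"
  proof -
    have z: "0\<^sub>v 4 \<in> carrier_vec 4" by simp
    obtain m where m: "P (0\<^sub>v 4) m" using Pex[OF z] by blast
    have "degree m \<in> D" unfolding D_def using z m by blast
    then show ?thesis by blast
  qed
  have "Max D \<in> D" using Dfin Dne by (rule Max_in)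
  then have "\<exists>u m. Max D = degree m \<and> u \<in> carrier_vec 4 \<and> P u m" by (simp add: D_def)
  then obtain u m where um: "degree m = Max D" "u \<in> carrier_vec 4" "P u m" by metis
  have maxp: "degree c \<le> degree m" if "v \<in> carrier_vec 4" "P v c" for v c
  proof -
    have "degree c \<in> D" using that unfolding D_def by blast
    then show ?thesis using Max_ge[OF Dfin] um(1) by simp
  qed
  have kill: "act B m w = 0\<^sub>v 4" if w: "w \<in> carrier_vec 4" for w
  proof (rule max_ann_kills[OF B _ um(2) _ _ _ _ w])
    show "\<exists>q. q \<noteq> 0 \<and> act B q v = 0\<^sub>v 4" if "v \<in> carrier_vec 4" for v using small[OF that] by blast
    show "monic m" "act B m u = 0\<^sub>v 4" "\<And>q. act B q u = 0\<^sub>v 4 \<Longrightarrow> m dvd q" using um(3) unfolding P_def by auto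
    show "degree c \<le> degree m" if "v \<in> carrier_vec 4" "monic c" "act B c v = 0\<^sub>v 4"
      "\<forall>q. act B q v = 0\<^sub>v 4 \<longrightarrow> c dvd q" for v c
      using maxp[of v c] that unfolding P_def by blast
  qed
  have pm0: "poly_mat m B = 0\<^sub>m 4 4"
  proof (rule eq_matI)
    fix i j assume ij: "i < dim_row (0\<^sub>m 4 4 :: 'a mat)" "j < dim_col (0\<^sub>m 4 4 :: 'a mat)"
    have "(poly_mat m B *\<^sub>v unit_vec 4 j) $ i = 0"
      using kill[of "unit_vec 4 j"] ij unfolding act_def by simp
    then show "poly_mat m B $$ (i, j) = 0\<^sub>m 4 4 $$ (i, j)" using ij B by simp
  qed (use B in auto)
  have "m \<noteq> 0" using um(3) unfolding P_def by auto
  then have "4 \<le> degree m" using H[OF pm0] by simp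
  moreover obtain m' where "P u m'" "degree m' \<le> 3" using Pex[OF um(2)] by blast
  moreover have "m = m'" using Puniq um(3) \<open>P u m'\<close> by blast
  ultimately show False by simp
qed



definition comp4 :: "'a::field vec \<Rightarrow> 'a mat" where
  "comp4 c = mat 4 4 (\<lambda>(i,j). if j < 3 then (if i = Suc j then 1 else 0) else c $ i)"

lemma comp4_carrier[simp]: "comp4 c \<in> carrier_mat 4 4" by (simp add: comp4_def)

lemma inverse_exists:
  fixes K :: "'a::field mat"
  assumes K: "K \<in> carrier_mat n n" and d: "det K \<noteq> 0"
  shows "\<exists>Ki. Ki \<in> carrier_mat n n \<and> K * Ki = 1\<^sub>m n \<and> Ki * K = 1\<^sub>m n"
proof -
  from det_non_zero_imp_unit[OF K d, of "()"]
  obtain Ki where Ki: "Ki \<in> carrier_mat n n" "Ki * K = 1\<^sub>m n"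
    unfolding Units_def ring_mat_def by auto
  moreover have "K * Ki = 1\<^sub>m n" by (rule mat_mult_left_right_inverse[OF Ki(1) K Ki(2)])
  ultimately show ?thesis by blast
qed

lemma companion_sim:
  fixes B :: "'a::field mat"
  assumes B: "B \<in> carrier_mat 4 4" and u: "u \<in> carrier_vec 4" and d: "det (krylov B u) \<noteq> 0"
  shows "\<exists>K Ki c. K \<in> carrier_mat 4 4 \<and> Ki \<in> carrier_mat 4 4 \<and> K * Ki = 1\<^sub>m 4 \<and> Ki * K = 1\<^sub>m 4
     \<and> B = K * comp4 c * Ki"
proof -
  define K where "K = krylov B u"
  have Kc: "K \<in> carrier_mat 4 4" unfolding K_def by simp
  obtain Ki where Ki: "Ki \<in> carrier_mat 4 4" "K * Ki = 1\<^sub>m 4" "Ki * K = 1\<^sub>m 4"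
    using inverse_exists[OF Kc] d unfolding K_def by blast
  define c where "c = Ki *\<^sub>v kv B 4 u"
  have dK: "dim_row K = 4" "dim_col K = 4" using Kc by auto
  have dC: "dim_row (comp4 c) = 4" "dim_col (comp4 c) = 4" by (simp_all add: comp4_def)
  have kvc: "kv B j u \<in> carrier_vec 4" for j using B u by simp
  have colK: "col K j = kv B j u" if "j < 4" for j
    using that kvc[of j] unfolding K_def krylov_def by (intro eq_vecI) auto
  have rowK: "row K i $ l = kv B l u $ i" if "i < 4" "l < 4" for i l
    using that unfolding K_def krylov_def by simp
  have entK: "K $$ (i,l) = kv B l u $ i" if "i < 4" "l < 4" for i l
    using that unfolding K_def krylov_def by simp
  have Kc_eq: "K *\<^sub>v c = kv B 4 u"
  proof -
    have "K *\<^sub>v c = (K * Ki) *\<^sub>v kv B 4 u" unfolding c_def using assoc_mult_mat_vec[OF Kc Ki(1) kvc] by simp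
    also have "\<dots> = kv B 4 u" using Ki(2) kvc by simp
    finally show ?thesis .
  qed
  have BK: "B * K = K * comp4 c"
  proof (rule eq_matI)
    fix i j assume ij: "i < dim_row (K * comp4 c)" "j < dim_col (K * comp4 c)"
    then have i: "i < 4" and j: "j < 4" using Kc comp4_carrier[of c] by auto
    have l: "(B * K) $$ (i,j) = kv B (Suc j) u $ i"
      using i j B colK[OF j] by (simp add: dK kv_Suc)
    have r: "(K * comp4 c) $$ (i,j) = (\<Sum>l\<in>{0..<4}. kv B l u $ i * comp4 c $$ (l,j))"
      using i j by (simp add: dK dC scalar_prod_def) (rule sum.cong, auto simp: entK)
    have kc: "(K *\<^sub>v c) $ i = (\<Sum>l\<in>{0..<4}. kv B l u $ i * c $ l)"
      using i Ki(1) by (simp add: dK scalar_prod_def c_def) (rule sum.cong, auto simp: entK)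
    have kc2: "kv B 4 u $ i = kv B 0 u $ i * c $ 0 + kv B 1 u $ i * c $ 1 + kv B 2 u $ i * c $ 2 + kv B 3 u $ i * c $ 3"
      using kc Kc_eq unfolding sum4 by simp
    show "(B * K) $$ (i,j) = (K * comp4 c) $$ (i,j)"
      unfolding l r sum4 using less4[OF j] kc2 by (auto simp: comp4_def eval_nat_numeral)
  qed (use B Kc dC in auto)
  have "B = B * (K * Ki)" using B Ki(2) by simp
  also have "\<dots> = (B * K) * Ki" using B Kc Ki(1) by simp
  also have "\<dots> = K * comp4 c * Ki" unfolding BK ..
  finally show ?thesis using Kc Ki by blast
qed

lemma mat_trace_comm:
  fixes A :: "'a::comm_ring_1 mat"
  assumes A: "A \<in> carrier_mat n m" and B: "B \<in> carrier_mat m n"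
  shows "mat_trace (A * B) = mat_trace (B * A)"
proof -
  have "mat_trace (A * B) = (\<Sum>i<n. \<Sum>k<m. A $$ (i,k) * B $$ (k,i))"
    using A B by (simp add: mat_trace_def scalar_prod_def atLeast0LessThan)
  also have "\<dots> = (\<Sum>k<m. \<Sum>i<n. B $$ (k,i) * A $$ (i,k))"
    by (subst sum.swap) (simp add: mult.commute)
  also have "\<dots> = mat_trace (B * A)"
    using A B by (simp add: mat_trace_def scalar_prod_def atLeast0LessThan)
  finally show ?thesis .
qed

lemma mat_trace_sim:
  fixes C :: "'a::comm_ring_1 mat"
  assumes K: "K \<in> carrier_mat n n" and Ki: "Ki \<in> carrier_mat n n" and C: "C \<in> carrier_mat n n"
    and inv: "Ki * K = 1\<^sub>m n"
  shows "mat_trace (K * C * Ki) = mat_trace C"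
proof -
  have "mat_trace (K * C * Ki) = mat_trace (K * (C * Ki))" using K C Ki by simp
  also have "\<dots> = mat_trace ((C * Ki) * K)" by (rule mat_trace_comm[OF K]) (use C Ki in simp)
  also have "\<dots> = mat_trace (C * (Ki * K))" using K C Ki by simp
  also have "\<dots> = mat_trace C" using inv C by simp
  finally show ?thesis .
qed

lemma mat_trace_comp4: "mat_trace (comp4 c) = c $ 3"
  by (simp add: mat_trace_def comp4_def eval_nat_numeral lessThan_Suc)


lemma cancel_left:
  fixes P Pi :: "'a::field mat"
  assumes P: "P \<in> carrier_mat n n" and Pi: "Pi \<in> carrier_mat n n" and e: "P * Pi = 1\<^sub>m n"
    and X: "X \<in> carrier_mat n m"
  shows "P * (Pi * X) = X"
proof -
  have "P * (Pi * X) = (P * Pi) * X" using P Pi X by simp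
  also have "\<dots> = X" using e X by simp
  finally show ?thesis .
qed

lemma assoc4: "A \<in> carrier_mat 4 4 \<Longrightarrow> B \<in> carrier_mat 4 4 \<Longrightarrow> C \<in> carrier_mat 4 4 \<Longrightarrow>
   (A * B) * C = A * (B * (C :: 'a::field mat))" by simp
lemma mult4: "A \<in> carrier_mat 4 4 \<Longrightarrow> B \<in> carrier_mat 4 4 \<Longrightarrow> A * (B :: 'a::field mat) \<in> carrier_mat 4 4" by simp

lemma transfer:
  fixes B P Pi Bm Nm Dm E Ei L :: "'a::field mat"
  assumes c: "P \<in> carrier_mat 4 4" "Pi \<in> carrier_mat 4 4" "Nm \<in> carrier_mat 4 4"
    "Dm \<in> carrier_mat 4 4" "E \<in> carrier_mat 4 4" "Ei \<in> carrier_mat 4 4" "L \<in> carrier_mat 4 4"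
    and PPi: "P * Pi = 1\<^sub>m 4" and PiP: "Pi * P = 1\<^sub>m 4"
    and BB: "B = P * (Nm + Dm) * Pi" and NN: "Nm * Nm = 0\<^sub>m 4 4"
    and EiE: "Ei * E = 1\<^sub>m 4" and diag: "Ei * Dm * E = L" and Ld: "diagonal_mat L"
  shows "\<exists>N D. N \<in> carrier_mat 4 4 \<and> D \<in> carrier_mat 4 4 \<and> B = N + D \<and> N * N = 0\<^sub>m 4 4
     \<and> diagonalizable D \<and> (\<forall>x. eigenvalue D x \<longleftrightarrow> (\<exists>i<4. L $$ (i,i) = x))"
proof -
  have EEi: "E * Ei = 1\<^sub>m 4" by (rule mat_mult_left_right_inverse[OF c(6) c(5) EiE])
  define N where "N = P * Nm * Pi"
  define D where "D = P * Dm * Pi"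
  have Nc: "N \<in> carrier_mat 4 4" and Dc: "D \<in> carrier_mat 4 4" unfolding N_def D_def using c by auto
  have NDc: "Nm + Dm \<in> carrier_mat 4 4" using c by (simp add: assoc4 mult4)
  have "B = P * ((Nm + Dm) * Pi)" unfolding BB using c NDc by (simp only: assoc_mult_mat)
  also have "(Nm + Dm) * Pi = Nm * Pi + Dm * Pi" by (rule add_mult_distrib_mat[OF c(3) c(4) c(2)])
  also have "P * (Nm * Pi + Dm * Pi) = P * (Nm * Pi) + P * (Dm * Pi)" 
    by (rule mult_add_distrib_mat[OF c(1)]) (use c in auto)
  also have "\<dots> = N + D" unfolding N_def D_def using c by (simp add: assoc4 mult4)
  finally have BND: "B = N + D" .
  have c1: "P * (Pi * X) = X" if "X \<in> carrier_mat 4 4" for X by (rule cancel_left[OF c(1,2) PPi that])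
  have c2: "Pi * (P * X) = X" if "X \<in> carrier_mat 4 4" for X by (rule cancel_left[OF c(2,1) PiP that])
  have c3: "E * (Ei * X) = X" if "X \<in> carrier_mat 4 4" for X by (rule cancel_left[OF c(5,6) EEi that])
  have c4: "Ei * (E * X) = X" if "X \<in> carrier_mat 4 4" for X by (rule cancel_left[OF c(6,5) EiE that])
  have "N * N = P * (Nm * (Pi * (P * (Nm * Pi))))" unfolding N_def using c by (simp add: assoc4 mult4)
  also have "\<dots> = P * (Nm * (Nm * Pi))" using c by (simp add: assoc4 mult4 c2)
  also have "\<dots> = P * ((Nm * Nm) * Pi)" using c by (simp add: assoc4 mult4)
  also have "\<dots> = 0\<^sub>m 4 4" unfolding NN using c by (simp add: assoc4 mult4)
  finally have NN': "N * N = 0\<^sub>m 4 4" .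
  define U where "U = P * E"
  define V where "V = Ei * Pi"
  have Uc: "U \<in> carrier_mat 4 4" and Vc: "V \<in> carrier_mat 4 4" unfolding U_def V_def using c by auto
  have UV: "U * V = 1\<^sub>m 4"
  proof -
    have "U * V = P * (E * (Ei * Pi))" unfolding U_def V_def using c by (simp add: assoc4 mult4)
    also have "\<dots> = 1\<^sub>m 4" using c PPi by (simp add: assoc4 mult4 c3)
    finally show ?thesis .
  qed
  have VU: "V * U = 1\<^sub>m 4"
  proof -
    have "V * U = Ei * (Pi * (P * E))" unfolding U_def V_def using c by (simp add: assoc4 mult4)
    also have "\<dots> = 1\<^sub>m 4" using c EiE by (simp add: assoc4 mult4 c2)
    finally show ?thesis .
  qed
  have VDU: "V * D * U = L"
  proof -
    have "V * D * U = Ei * (Pi * (P * (Dm * (Pi * (P * E)))))" unfolding U_def V_def D_def using c by (simp add: assoc4 mult4)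
    also have "\<dots> = Ei * (Dm * E)" using c by (simp add: assoc4 mult4 c2)
    also have "\<dots> = L" using diag c by (simp add: assoc4 mult4)
    finally show ?thesis .
  qed
  have dD: "dim_row D = 4" using Dc by simp
  have diagD: "diagonalizable D" unfolding diagonalizable_def dD
    using Uc Vc UV VU VDU Ld by blast
  have DUL: "D = U * L * V"
  proof -
    have "U * L * V = P * (E * (Ei * (Dm * (E * (Ei * Pi)))))" unfolding U_def V_def diag[symmetric] using c by (simp add: assoc4 mult4)
    also have "\<dots> = P * (Dm * Pi)" using c by (simp add: assoc4 mult4 c3)
    also have "\<dots> = D" unfolding D_def using c by (simp add: assoc4 mult4)
    finally show ?thesis by simp
  qed
  have sim: "similar_mat D L" 
    by (rule similar_matI[of D L U V 4]) (use Dc c Uc Vc UV VU DUL in auto)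
  have ut: "upper_triangular L" using Ld c unfolding diagonal_mat_def upper_triangular_def by auto
  have eig: "eigenvalue D x \<longleftrightarrow> (\<exists>i<4. L $$ (i,i) = x)" for x
  proof -
    have "eigenvalue D x \<longleftrightarrow> poly (char_poly L) x = 0"
      unfolding eigenvalue_root_char_poly[OF Dc] char_poly_similar[OF sim] ..
    also have "char_poly L = (\<Prod>a\<leftarrow>diag_mat L. [:- a, 1:])" by (rule char_poly_upper_triangular[OF c(7) ut])
    also have "poly (\<Prod>a\<leftarrow>diag_mat L. [:- a, 1:]) x = 0 \<longleftrightarrow> (\<exists>a\<in>set (diag_mat L). x = a)"
      by (induct "diag_mat L") (auto simp: poly_prod_list)
    also have "\<dots> \<longleftrightarrow> (\<exists>i<4. L $$ (i,i) = x)" using c(7) unfolding diag_mat_def by auto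
    finally show ?thesis .
  qed
  show ?thesis using Nc Dc BND NN' diagD eig by blast
qed


definition m4 :: "'a list list \<Rightarrow> 'a mat" where
  "m4 X = mat 4 4 (\<lambda>(i,j). X ! i ! j)"

lemma m4_carrier[simp]: "m4 X \<in> carrier_mat 4 4" by (simp add: m4_def)
lemma m4_dims[simp]: "dim_row (m4 X) = 4" "dim_col (m4 X) = 4" by (simp_all add: m4_def)
lemma m4_index: "i < 4 \<Longrightarrow> j < 4 \<Longrightarrow> m4 X $$ (i,j) = X ! i ! j" by (simp add: m4_def)

lemma m4_mult_index: "i < 4 \<Longrightarrow> j < 4 \<Longrightarrow>
  (m4 X * m4 Y) $$ (i,j) = X!i!0 * Y!0!j + X!i!1 * Y!1!j + X!i!2 * Y!2!j + X!i!3 * (Y!3!j :: 'a::comm_ring_1)"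
  by (simp add: m4_def scalar_prod_def sum4)

lemma eq4I: "A \<in> carrier_mat 4 4 \<Longrightarrow> B \<in> carrier_mat 4 4 \<Longrightarrow>
   (\<And>i j. i < 4 \<Longrightarrow> j < 4 \<Longrightarrow> A $$ (i,j) = B $$ (i,j)) \<Longrightarrow> A = B"
  by (intro eq_matI) auto

lemma all4: "(\<forall>i<4::nat. P i) \<longleftrightarrow> P 0 \<and> P 1 \<and> P 2 \<and> P 3"
  by (auto dest!: less4)

lemma char2:
  fixes x y :: "'a::field"
  assumes "(2::'a) = 0"
  shows "x + x = 0" "x + (x + y) = y" "- x = x" "x - y = x + y"
proof -
  show xx: "x + x = 0" using assms by (metis mult_2 mult_zero_left)
  show "x + (x + y) = y" by (simp add: add.assoc[symmetric] xx)
  show "- x = x" using xx by (simp add: add_eq_0_iff)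
  have "- y = y" using assms by (metis add_eq_0_iff mult_2 mult_zero_left)
  then show "x - y = x + y" by (metis diff_conv_add_uminus)
qed

lemma comp4_m4: "comp4 c = m4 [[0,0,0,c$0],[1,0,0,c$1],[0,1,0,c$2],[0,0,1,c$3]]"
  by (rule eq4I) (auto dest!: less4 simp: comp4_def m4_index)

lemma smult_one4: "k \<cdot>\<^sub>m 1\<^sub>m 4 = m4 [[k,0,0,0],[0,k,0,0],[0,0,k,0],[0,0,0,k::'a::field]]"
  by (rule eq4I) (auto dest!: less4 simp: m4_index)

lemma one4: "1\<^sub>m 4 = m4 [[1,0,0,0],[0,1,0,0],[0,0,1,0],[0,0,0,1::'a::field]]"
  by (rule eq4I) (auto dest!: less4 simp: m4_index)

lemma zero4: "0\<^sub>m 4 4 = m4 [[0,0,0,0],[0,0,0,0],[0,0,0,0],[0,0,0,0::'a::field]]"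
  by (rule eq4I) (auto dest!: less4 simp: m4_index)

lemma diag4: "diagonal_mat (m4 [[x0,0,0,0],[0,x1,0,0],[0,0,x2,0],[0,0,0,x3::'a::field]])"
  unfolding diagonal_mat_def by (auto dest!: less4 simp: m4_index)

lemma diag4_entries: "(\<exists>i<4. m4 [[x0,0,0,0],[0,x1,0,0],[0,0,x2,0],[0,0,0,x3::'a::field]] $$ (i,i) = x)
   \<longleftrightarrow> x \<in> {x0,x1,x2,x3}" (is "(\<exists>i<4. ?M $$ (i,i) = x) \<longleftrightarrow> _")
proof
  assume "\<exists>i<4. ?M $$ (i,i) = x"
  then show "x \<in> {x0,x1,x2,x3}" by (auto dest!: less4 simp: m4_index)
next
  have e: "?M $$ (0,0) = x0" "?M $$ (1,1) = x1" "?M $$ (2,2) = x2" "?M $$ (3,3) = x3"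
    by (simp_all add: m4_index)
  assume "x \<in> {x0,x1,x2,x3}"
  then consider "x = x0" | "x = x1" | "x = x2" | "x = x3" by blast
  then show "\<exists>i<4. ?M $$ (i,i) = x"
  proof cases
    case 1 then show ?thesis using e(1) by (intro exI[of _ 0]) simp
  next
    case 2 then show ?thesis using e(2) by (intro exI[of _ 1]) simp
  next
    case 3 then show ?thesis using e(3) by (intro exI[of _ 2]) simp
  next
    case 4 then show ?thesis using e(4) by (intro exI[of _ 3]) simp
  qed
qed

definition good :: "'a::field vec \<Rightarrow> 'a mat \<Rightarrow> 'a mat \<Rightarrow> 'a mat \<Rightarrow> 'a mat \<Rightarrow> 'a mat \<Rightarrow> 'a mat \<Rightarrow> 'a mat \<Rightarrow> bool" where
  "good c Q Qi Nm Dm E Ei L \<longleftrightarrow> (Q \<in> carrier_mat 4 4 \<and> Qi \<in> carrier_mat 4 4 \<and> Nm \<in> carrier_mat 4 4 \<and>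
     Dm \<in> carrier_mat 4 4 \<and> E \<in> carrier_mat 4 4 \<and> Ei \<in> carrier_mat 4 4 \<and> L \<in> carrier_mat 4 4 \<and>
     Q * Qi = 1\<^sub>m 4 \<and> Qi * Q = 1\<^sub>m 4 \<and> comp4 c = Q * (Nm + Dm) * Qi \<and> Nm * Nm = 0\<^sub>m 4 4 \<and>
     Ei * E = 1\<^sub>m 4 \<and> Ei * Dm * E = L \<and> diagonal_mat L)"

lemma case_b_comp:
  fixes a :: "'a::field" and c :: "'a vec"
  assumes two: "(2::'a) = 0" and a0: "a \<noteq> 0" and a1: "a \<noteq> 1" and c3: "c $ 3 = 0"
  shows "\<exists>Q Qi Nm Dm E Ei L. good c Q Qi Nm Dm E Ei L \<and> (\<forall>x. (\<exists>i<4. L $$ (i,i) = x) \<longleftrightarrow> x \<in> {0,1,a,a+1})"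
proof -
  define ab where "ab = a * (a + 1)"
  have a10: "a + 1 \<noteq> 0"
  proof
    assume "a + 1 = 0"
    then have "a = - 1" by (simp add: eq_neg_iff_add_eq_0)
    then show False using a1 char2(3)[OF two, of 1] by simp
  qed
  have ab0: "ab \<noteq> 0" unfolding ab_def using a0 a10 by simp
  define Nm where "Nm = m4 [[0,0,0,c$0],[0,0,0,c$1 - ab],[0,0,0,c$2 - (1 + ab)],[0,0,0,0]]"
  define Dm where "Dm = m4 [[0,0,0,0],[1,0,0,ab],[0,1,0,1 + ab],[0,0,1,0]]"
  define Ei where "Ei = m4 [[1,0,0,0],[1,1,1,1],[1,a,a^2,a^3],[1,a+1,(a+1)^2,(a+1)^3]]"
  define E0 where "E0 = m4 [[ab,0,0,0],[ab+1,ab,a+1,a],[0,1,a,a+1],[1,1,1,1]]"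
  define E where "E = inverse ab \<cdot>\<^sub>m E0"
  define L where "L = m4 [[0,0,0,0],[0,1,0,0],[0,0,a,0],[0,0,0,a+1]]"
  have cE: "E \<in> carrier_mat 4 4" unfolding E_def E0_def by simp
  have sum: "comp4 c = 1\<^sub>m 4 * (Nm + Dm) * 1\<^sub>m 4"
  proof -
    have "comp4 c = Nm + Dm" unfolding comp4_m4 Nm_def Dm_def
      by (rule eq4I) (auto dest!: less4 simp: m4_index c3)
    then show ?thesis unfolding Nm_def Dm_def by simp
  qed
  have NN: "Nm * Nm = 0\<^sub>m 4 4" unfolding Nm_def zero4
    by (rule eq4I) (auto dest!: less4 simp del: index_mult_mat simp: mult4 m4_mult_index m4_index)
  have EiE0: "Ei * E0 = ab \<cdot>\<^sub>m 1\<^sub>m 4" unfolding Ei_def E0_def smult_one4 ab_def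
    by (rule eq4I) (auto dest!: less4 simp del: index_mult_mat simp: mult4 m4_mult_index m4_index 
       ring_distribs power2_eq_square power3_eq_cube add_ac mult_ac char2[OF two])
  have EiE: "Ei * E = 1\<^sub>m 4"
  proof -
    have "Ei * E = inverse ab \<cdot>\<^sub>m (Ei * E0)" unfolding E_def Ei_def E0_def
      by (rule mult_smult_distrib[of _ 4 4 _ 4]) simp_all
    also have "\<dots> = 1\<^sub>m 4" unfolding EiE0 using ab0 by (intro eq_matI) auto
    finally show ?thesis .
  qed
  have EiD: "Ei * Dm = L * Ei" unfolding Ei_def Dm_def L_def ab_def
    by (rule eq4I) (auto dest!: less4 simp del: index_mult_mat simp: mult4 m4_mult_index m4_index 
       ring_distribs power2_eq_square power3_eq_cube add_ac mult_ac char2[OF two])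
  have diag: "Ei * Dm * E = L"
  proof -
    have "Ei * Dm * E = L * (Ei * E)" unfolding EiD by (rule assoc4) (simp_all add: cE L_def Ei_def)
    also have "\<dots> = L" unfolding EiE L_def by simp
    finally show ?thesis .
  qed
  have eig: "(\<exists>i<4. L $$ (i,i) = x) \<longleftrightarrow> x \<in> {0,1,a,a+1}" for x
    unfolding L_def diag4_entries ..
  show ?thesis
    apply (rule exI[of _ "1\<^sub>m 4"], rule exI[of _ "1\<^sub>m 4"], rule exI[of _ Nm], rule exI[of _ Dm],
      rule exI[of _ E], rule exI[of _ Ei], rule exI[of _ L])
    using sum NN EiE diag eig cE unfolding good_def Nm_def Dm_def Ei_def L_def by (simp add: diag4)
qed


lemma case_a_comp:
  fixes a :: "'a::field" and c :: "'a vec"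
  assumes two: "(2::'a) = 0" and u0: "c $ 3 \<noteq> 0" and a0: "a \<noteq> 0" and ac: "a \<noteq> c $ 3"
  shows "\<exists>Q Qi Nm Dm E Ei L. good c Q Qi Nm Dm E Ei L \<and> (\<forall>x. (\<exists>i<4. L $$ (i,i) = x) \<longleftrightarrow> x \<in> {0,0,a,c$3 + a})"
proof -
  define u where "u = c $ 3"
  define b where "b = u + a"
  define cc where "cc = c $ 2 + a * b"
  define k where "k = c $ 1 + a * cc"
  have b0: "b \<noteq> 0"
  proof
    assume "b = 0"
    then have "a = - u" unfolding b_def by (simp add: eq_neg_iff_add_eq_0 add.commute)
    then show False using ac char2(3)[OF two, of u] unfolding u_def by simp
  qed
  have u0': "u \<noteq> 0" using u0 unfolding u_def .
  define Q where "Q = m4 [[1,0,0,0],[0,a,1,0],[0,1,0,a],[0,0,0,1]]"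
  define Qi where "Qi = m4 [[1,0,0,0],[0,0,1,a],[0,1,a,a*a],[0,0,0,1]]"
  define Nm where "Nm = m4 [[0,0,0,c$0],[0,0,1,cc],[0,0,0,0],[0,0,0,0]]"
  define Dm where "Dm = m4 [[0,0,0,0],[0,0,0,0],[1,0,a,k],[0,1,0,b]]"
  define E where "E = m4 [[a,k,0,0],[0,b,0,0],[1,0,1,k],[0,1,0,u]]"
  define Ei0 where "Ei0 = m4 [[b*u, -(k*u), 0, 0],[0, a*u, 0, 0],[-(b*u), k*u + a*k, a*b*u, -(a*b*k)],[0, -a, 0, a*b]]"
  define Ei where "Ei = inverse (a*b*u) \<cdot>\<^sub>m Ei0"
  define L where "L = m4 [[0,0,0,0],[0,0,0,0],[0,0,a,0],[0,0,0,b]]"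
  have cEi: "Ei \<in> carrier_mat 4 4" unfolding Ei_def Ei0_def by simp
  have QQi: "Q * Qi = 1\<^sub>m 4" unfolding Q_def Qi_def one4
    by (rule eq4I) (auto dest!: less4 simp del: index_mult_mat simp: mult4 m4_mult_index m4_index 
       ring_distribs add_ac mult_ac char2[OF two])
  have QiQ: "Qi * Q = 1\<^sub>m 4" unfolding Q_def Qi_def one4
    by (rule eq4I) (auto dest!: less4 simp del: index_mult_mat simp: mult4 m4_mult_index m4_index 
       ring_distribs add_ac mult_ac char2[OF two])
  have CQ: "comp4 c * Q = Q * (Nm + Dm)"
  proof -
    have ND: "Nm + Dm = m4 [[0,0,0,c$0],[0,0,1,cc],[1,0,a,k],[0,1,0,b]]" unfolding Nm_def Dm_def
      by (rule eq4I) (auto dest!: less4 simp: m4_index)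
    show ?thesis unfolding ND comp4_m4 Q_def k_def cc_def b_def u_def
      by (rule eq4I) (auto dest!: less4 simp del: index_mult_mat simp: mult4 m4_mult_index m4_index 
         ring_distribs add_ac mult_ac char2[OF two])
  qed
  have sum: "comp4 c = Q * (Nm + Dm) * Qi"
  proof -
    have "comp4 c = comp4 c * (Q * Qi)" unfolding QQi by (simp add: right_mult_one_mat[OF comp4_carrier])
    also have "\<dots> = (comp4 c * Q) * Qi" by (rule assoc4[symmetric]) (simp_all add: Q_def Qi_def)
    finally show ?thesis unfolding CQ .
  qed
  have NN: "Nm * Nm = 0\<^sub>m 4 4" unfolding Nm_def zero4
    by (rule eq4I) (auto dest!: less4 simp del: index_mult_mat simp: mult4 m4_mult_index m4_index)
  have Ei0E: "Ei0 * E = (a*b*u) \<cdot>\<^sub>m 1\<^sub>m 4" unfolding Ei0_def E_def smult_one4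
    by (rule eq4I) (auto dest!: less4 simp del: index_mult_mat simp: mult4 m4_mult_index m4_index 
       ring_distribs add_ac mult_ac)
  have abu: "a * b * u \<noteq> 0" using a0 b0 u0' by simp
  have EiE: "Ei * E = 1\<^sub>m 4"
  proof -
    have "Ei * E = inverse (a*b*u) \<cdot>\<^sub>m (Ei0 * E)" unfolding E_def Ei_def Ei0_def
      by (rule mult_smult_assoc_mat[of _ 4 4 _ 4]) simp_all
    also have "\<dots> = 1\<^sub>m 4" unfolding Ei0E using a0 b0 u0' by (intro eq_matI) (auto simp: field_simps)
    finally show ?thesis .
  qed
  have DE: "Dm * E = E * L" unfolding Dm_def E_def L_def b_def
    by (rule eq4I) (auto dest!: less4 simp del: index_mult_mat simp: mult4 m4_mult_index m4_index 
       ring_distribs add_ac mult_ac char2[OF two])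
  have diag: "Ei * Dm * E = L"
  proof -
    have "Ei * Dm * E = Ei * (Dm * E)" by (rule assoc4) (simp_all add: cEi Dm_def E_def)
    also have "\<dots> = Ei * (E * L)" unfolding DE ..
    also have "\<dots> = (Ei * E) * L" by (rule assoc4[symmetric]) (simp_all add: cEi L_def E_def)
    also have "\<dots> = L" unfolding EiE L_def by simp
    finally show ?thesis .
  qed
  have eig: "(\<exists>i<4. L $$ (i,i) = x) \<longleftrightarrow> x \<in> {0,0,a,c$3 + a}" for x
    unfolding L_def diag4_entries b_def u_def ..
  show ?thesis
    apply (rule exI[of _ Q], rule exI[of _ Qi], rule exI[of _ Nm], rule exI[of _ Dm],
      rule exI[of _ E], rule exI[of _ Ei], rule exI[of _ L])
    using QQi QiQ sum NN EiE diag eig cEi unfolding good_def Q_def Qi_def Nm_def Dm_def E_def L_def by (simp add: diag4)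
qed


lemma combine:
  fixes B K Ki Q Qi Nm Dm E Ei L :: "'a::field mat"
  assumes K: "K \<in> carrier_mat 4 4" and Ki: "Ki \<in> carrier_mat 4 4" and KKi: "K * Ki = 1\<^sub>m 4" and KiK: "Ki * K = 1\<^sub>m 4"
    and BK: "B = K * comp4 c * Ki"
    and data: "good c Q Qi Nm Dm E Ei L"
  shows "\<exists>N D. N \<in> carrier_mat 4 4 \<and> D \<in> carrier_mat 4 4 \<and> B = N + D \<and> N * N = 0\<^sub>m 4 4
     \<and> diagonalizable D \<and> (\<forall>x. eigenvalue D x \<longleftrightarrow> (\<exists>i<4. L $$ (i,i) = x))"
proof -
  from data have Q: "Q \<in> carrier_mat 4 4" and Qi: "Qi \<in> carrier_mat 4 4" and Nm: "Nm \<in> carrier_mat 4 4"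
    and Dm: "Dm \<in> carrier_mat 4 4" and E: "E \<in> carrier_mat 4 4" and Ei: "Ei \<in> carrier_mat 4 4"
    and L: "L \<in> carrier_mat 4 4" and QQi: "Q * Qi = 1\<^sub>m 4" and QiQ: "Qi * Q = 1\<^sub>m 4"
    and C: "comp4 c = Q * (Nm + Dm) * Qi" and NN: "Nm * Nm = 0\<^sub>m 4 4" and EiE: "Ei * E = 1\<^sub>m 4"
    and dg: "Ei * Dm * E = L" and Ld: "diagonal_mat L" unfolding good_def by auto
  have ND: "Nm + Dm \<in> carrier_mat 4 4" using Nm Dm by simp
  define P where "P = K * Q"
  define Pi where "Pi = Qi * Ki"
  have P: "P \<in> carrier_mat 4 4" and Pi: "Pi \<in> carrier_mat 4 4" unfolding P_def Pi_def using K Ki Q Qi by auto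
  have PPi: "P * Pi = 1\<^sub>m 4"
  proof -
    have "P * Pi = K * (Q * (Qi * Ki))" unfolding P_def Pi_def using K Ki Q Qi by (simp add: assoc4 mult4)
    also have "\<dots> = 1\<^sub>m 4" using K Ki Q Qi KKi by (simp add: cancel_left[OF Q Qi QQi])
    finally show ?thesis .
  qed
  have PiP: "Pi * P = 1\<^sub>m 4"
  proof -
    have "Pi * P = Qi * (Ki * (K * Q))" unfolding P_def Pi_def using K Ki Q Qi by (simp add: assoc4 mult4)
    also have "\<dots> = 1\<^sub>m 4" using K Ki Q Qi QiQ by (simp add: cancel_left[OF Ki K KiK])
    finally show ?thesis .
  qed
  have BB: "B = P * (Nm + Dm) * Pi"
    unfolding BK C P_def Pi_def using K Ki Q Qi ND by (simp add: assoc4 mult4)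
  show ?thesis by (rule transfer[OF P Pi Nm Dm E Ei L PPi PiP BB NN EiE dg Ld])
qed


theorem proposition2p5:
  fixes B :: "'a :: field mat"
  assumes char2: "CHAR('a) = 2"
    and card4: "infinite (UNIV :: 'a set) \<or> card (UNIV :: 'a set) \<ge> 4"
    and B4: "B \<in> carrier_mat 4 4"
    and nd: "non_derogative B"
  shows "(\<forall>u3 a. mat_trace B = u3 \<longrightarrow> u3 \<noteq> 0 \<longrightarrow> a \<noteq> 0 \<longrightarrow> a \<noteq> u3 \<longrightarrow>
           (\<exists>N D. N \<in> carrier_mat 4 4 \<and> D \<in> carrier_mat 4 4 \<and> B = N + D \<and>
              N * N = 0\<^sub>m 4 4 \<and> diagonalizable D \<and>
              (\<forall>x. eigenvalue D x \<longrightarrow> x \<in> {0, a, u3 + a})))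
       \<and> (mat_trace B = 0 \<longrightarrow> (\<forall>a. a \<noteq> 0 \<longrightarrow> a \<noteq> 1 \<longrightarrow>
           (\<exists>N D. N \<in> carrier_mat 4 4 \<and> D \<in> carrier_mat 4 4 \<and> B = N + D \<and>
              N * N = 0\<^sub>m 4 4 \<and> diagonalizable D \<and>
              {x. eigenvalue D x} = {0, 1, a, a + 1})))"
proof -
  have two: "(2::'a) = 0" using of_nat_CHAR[where 'a='a] char2 by simp
  have H: "4 \<le> degree q" if "poly_mat q B = 0\<^sub>m 4 4" "q \<noteq> 0" for q
    by (rule nd_no_small_ann[OF B4 nd that])
  obtain u where u: "u \<in> carrier_vec 4" "det (krylov B u) \<noteq> 0" using cyclic_exists[OF B4 H] by blast
  obtain K Ki c where K: "K \<in> carrier_mat 4 4" and Ki: "Ki \<in> carrier_mat 4 4" and KKi: "K * Ki = 1\<^sub>m 4"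
    and KiK: "Ki * K = 1\<^sub>m 4" and BK: "B = K * comp4 c * Ki"
    using companion_sim[OF B4 u] by blast
  have tr: "mat_trace B = c $ 3" unfolding BK mat_trace_sim[OF K Ki comp4_carrier KiK] mat_trace_comp4 ..
  show ?thesis
  proof (intro conjI allI impI)
    fix u3 a :: 'a
    assume t: "mat_trace B = u3" and u30: "u3 \<noteq> 0" and a0: "a \<noteq> 0" and au: "a \<noteq> u3"
    have c3: "c $ 3 = u3" using t tr by simp
    obtain Q Qi Nm Dm E Ei L where data: "good c Q Qi Nm Dm E Ei L"
      and eig: "\<forall>x. (\<exists>i<4. L $$ (i,i) = x) \<longleftrightarrow> x \<in> {0,0,a,c$3 + a}"
      using case_a_comp[OF two _ a0, of c] u30 au c3 by blast
    obtain N D where ND: "N \<in> carrier_mat 4 4" "D \<in> carrier_mat 4 4" "B = N + D" "N * N = 0\<^sub>m 4 4"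
      "diagonalizable D" "\<forall>x. eigenvalue D x \<longleftrightarrow> (\<exists>i<4. L $$ (i,i) = x)"
      using combine[OF K Ki KKi KiK BK data] by blast
    show "\<exists>N D. N \<in> carrier_mat 4 4 \<and> D \<in> carrier_mat 4 4 \<and> B = N + D \<and>
              N * N = 0\<^sub>m 4 4 \<and> diagonalizable D \<and>
              (\<forall>x. eigenvalue D x \<longrightarrow> x \<in> {0, a, u3 + a})"
      using ND eig c3 by auto
  next
    fix a :: 'a
    assume t: "mat_trace B = 0" and a0: "a \<noteq> 0" and a1: "a \<noteq> 1"
    have c3: "c $ 3 = 0" using t tr by simp
    obtain Q Qi Nm Dm E Ei L where data: "good c Q Qi Nm Dm E Ei L"
      and eig: "\<forall>x. (\<exists>i<4. L $$ (i,i) = x) \<longleftrightarrow> x \<in> {0,1,a,a+1}"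
      using case_b_comp[OF two a0 a1 c3] by blast
    obtain N D where ND: "N \<in> carrier_mat 4 4" "D \<in> carrier_mat 4 4" "B = N + D" "N * N = 0\<^sub>m 4 4"
      "diagonalizable D" "\<forall>x. eigenvalue D x \<longleftrightarrow> (\<exists>i<4. L $$ (i,i) = x)"
      using combine[OF K Ki KKi KiK BK data] by blast
    have "{x. eigenvalue D x} = {0, 1, a, a + 1}" using ND(6) eig by blast
    then show "\<exists>N D. N \<in> carrier_mat 4 4 \<and> D \<in> carrier_mat 4 4 \<and> B = N + D \<and>
              N * N = 0\<^sub>m 4 4 \<and> diagonalizable D \<and>
              {x. eigenvalue D x} = {0, 1, a, a + 1}"
      using ND by blast
  qed
qed

end
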